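(* Let $n\ge 3$ and let $K$ be a proper $4$-coloring of $H_2(n,n-1)$. (a) If $x_1,x_2,x_3,x_4$ are vertices forming a path of length $3$ (in this order) all of whose edges $(x_1,x_2),(x_2,x_3),(x_3,x_4)$ are transition edges for $K$, then $K(x_1),K(x_2),K(x_3),K(x_4)$ are pairwise distinct. (b) There is no simple path in $H_2(n,n-1)$ of length greater than $3$ all of whose edges are transition edges for $K$.
   Context: $H_2(n,n-1)$ is the simple undirected graph with vertex set $\mathbb{Z}_2^n$ in which $x,y$ are adjacent iff their Hamming distance is at least $n-1$. For a proper $k$-coloring $K$ of a simple graph, an edge $(x,y)$ is a transition edge for $K$ if swapping the colors of $x$ and $y$ (all other colors unchanged) yields again a proper $k$-coloring. *)

theory Defs
  imports Main
begin

text \<open>Vertices of H_2(n,n-1): elements of Z_2^n, represented as boolean lists of length n.\<close>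
definition cube :: "nat \<Rightarrow> bool list set" where
  "cube n = {x. length x = n}"

definition hamming :: "bool list \<Rightarrow> bool list \<Rightarrow> nat" where
  "hamming x y = card {i. i < length x \<and> x ! i \<noteq> y ! i}"

definition H_adj :: "nat \<Rightarrow> bool list \<Rightarrow> bool list \<Rightarrow> bool" where
  "H_adj n x y \<longleftrightarrow> x \<in> cube n \<and> y \<in> cube n \<and> x \<noteq> y \<and> hamming x y \<ge> n - 1"

definition proper_coloring ::
  "'v set \<Rightarrow> ('v \<Rightarrow> 'v \<Rightarrow> bool) \<Rightarrow> nat \<Rightarrow> ('v \<Rightarrow> nat) \<Rightarrow> bool" where
  "proper_coloring V E k K \<longleftrightarrow>
     (\<forall>v\<in>V. K v < k) \<and> (\<forall>u\<in>V. \<forall>v\<in>V. E u v \<longrightarrow> K u \<noteq> K v)"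

definition transition_edge ::
  "'v set \<Rightarrow> ('v \<Rightarrow> 'v \<Rightarrow> bool) \<Rightarrow> nat \<Rightarrow> ('v \<Rightarrow> nat) \<Rightarrow> 'v \<Rightarrow> 'v \<Rightarrow> bool" where
  "transition_edge V E k K x y \<longleftrightarrow>
     E x y \<and> proper_coloring V E k (K(x := K y, y := K x))"

text \<open>A simple path given by its vertex list: distinct vertices of V, consecutive ones adjacent.
  Its length is the number of edges, i.e. length xs - 1.\<close>
definition simple_path :: "'v set \<Rightarrow> ('v \<Rightarrow> 'v \<Rightarrow> bool) \<Rightarrow> 'v list \<Rightarrow> bool" where
  "simple_path V E xs \<longleftrightarrow> xs \<noteq> [] \<and> set xs \<subseteq> V \<and> distinct xs \<and>
     (\<forall>i. Suc i < length xs \<longrightarrow> E (xs ! i) (xs ! Suc i))"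

end

theory Submission imports Defs begin

definition nb :: "nat option \<Rightarrow> bool list \<Rightarrow> bool list" where
  "nb e x = (case e of None \<Rightarrow> map Not x | Some i \<Rightarrow> (map Not x)[i := x!i])"

definition EE :: "nat \<Rightarrow> nat option set" where
  "EE n = insert None (Some ` {..<n})"

lemma nb_length[simp]: "length (nb e x) = length x"
  by (cases e) (auto simp: nb_def)

lemma nb_nth: "i < length x \<Longrightarrow> nb e x ! i = (if e = Some i then x!i else \<not> x!i)"
  by (cases e) (auto simp: nb_def nth_list_update)

lemma nb_invol[simp]: "nb e (nb e x) = x"
  by (rule nth_equalityI) (auto simp: nb_nth)

lemma nb_comm: "nb e (nb f x) = nb f (nb e x)"
  by (rule nth_equalityI) (auto simp: nb_nth)

lemma nb_hamming: "length x = length y \<Longrightarrow> hamming (nb e x) (nb e y) = hamming x y"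
  unfolding hamming_def nb_length
proof (rule arg_cong[where f=card], rule Collect_cong)
  fix i assume "length x = length y"
  then show "(i < length x \<and> nb e x ! i \<noteq> nb e y ! i) = (i < length x \<and> x ! i \<noteq> y ! i)"
    by (cases "i < length x") (auto simp: nb_nth)
qed

lemma card_EE: "card (EE n) = Suc n"
  unfolding EE_def by (subst card_insert_disjoint) (auto simp: card_image)

lemma nb_cube: "x \<in> cube n \<Longrightarrow> nb e x \<in> cube n"
  by (simp add: cube_def)

lemma adj_nb:
  assumes "x \<in> cube n" "e \<in> EE n" "n \<ge> 2"
  shows "H_adj n x (nb e x)"
proof -
  have len: "length x = n" using assms(1) by (simp add: cube_def)
  have S: "{i. i < length x \<and> x ! i \<noteq> nb e x ! i} = {i. i < n \<and> e \<noteq> Some i}"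
    using len by (auto simp: nb_nth)
  have h: "hamming x (nb e x) \<ge> n - 1"
  proof (cases e)
    case None
    then have "{i. i < n \<and> e \<noteq> Some i} = {..<n}" by auto
    then show ?thesis using S by (simp add: hamming_def)
  next
    case (Some j)
    then have j: "j < n" using assms(2) by (auto simp: EE_def)
    have "{i. i < n \<and> e \<noteq> Some i} = {..<n} - {j}" using Some by auto
    then show ?thesis using S j by (simp add: hamming_def)
  qed
  have "x \<noteq> nb e x"
  proof
    assume eq: "x = nb e x"
    obtain i where "i < n" "e \<noteq> Some i"
    proof (cases e)
      case None then show ?thesis using that[of 0] assms(3) by auto
    next
      case (Some j)
      show ?thesis
      proof (cases "j = 0")
        case True then show ?thesis using that[of 1] Some assms(3) by simp
      next
        case False then show ?thesis using that[of 0] Some assms(3) by simp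
      qed
    qed
    then have "x ! i \<noteq> nb e x ! i" using len by (simp add: nb_nth)
    then show False using eq by simp
  qed
  then show ?thesis using assms h by (simp add: H_adj_def nb_cube)
qed

lemma adj_char:
  assumes "H_adj n x y"
  shows "\<exists>e\<in>EE n. y = nb e x"
proof -
  have len: "length x = n" "length y = n" using assms by (auto simp: H_adj_def cube_def)
  define S where "S = {i. i < n \<and> x ! i \<noteq> y ! i}"
  have cS: "card S \<ge> n - 1" using assms len by (simp add: H_adj_def hamming_def S_def)
  have Ssub: "S \<subseteq> {..<n}" by (auto simp: S_def)
  show ?thesis
  proof (cases "S = {..<n}")
    case True
    have "y = nb None x"
      by (rule nth_equalityI) (use True len in \<open>auto simp: nb_nth S_def set_eq_iff\<close>)
    then show ?thesis by (auto simp: EE_def)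
  next
    case False
    then obtain j where j: "j < n" "j \<notin> S" using Ssub by auto
    have "S \<subseteq> {..<n} - {j}" using Ssub j by auto
    moreover have "card ({..<n} - {j}) = n - 1" using j by simp
    ultimately have SS: "S = {..<n} - {j}" using cS
      by (metis card_seteq finite_Diff finite_lessThan)
    have "y = nb (Some j) x"
      by (rule nth_equalityI) (use SS len in \<open>auto simp: nb_nth S_def set_eq_iff\<close>)
    then show ?thesis using j by (auto simp: EE_def)
  qed
qed

lemma nb_inj:
  assumes "e \<in> EE n" "f \<in> EE n" "x \<in> cube n" "nb e x = nb f x"
  shows "e = f"
proof -
  have len: "length x = n" using assms by (simp add: cube_def)
  have "\<And>i. i < n \<Longrightarrow> nb e x ! i = nb f x ! i" using assms(4) by simp
  have c: "(e = Some i) = (f = Some i)" if i: "i < n" for i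
  proof -
    have "nb e x ! i = nb f x ! i" using assms(4) by simp
    then show ?thesis using i len nb_nth[of i x e] nb_nth[of i x f]
      by (cases "e = Some i"; cases "f = Some i") auto
  qed
  show ?thesis
    using assms(1,2) c by (cases e; cases f) (auto simp: EE_def)
qed

lemma adj_sym: "H_adj n x y \<Longrightarrow> H_adj n y x"
proof -
  assume a: "H_adj n x y"
  have "hamming y x = hamming x y"
    using a unfolding H_adj_def cube_def hamming_def by (metis (mono_tags) mem_Collect_eq)
  then show ?thesis using a by (auto simp: H_adj_def)
qed

lemma T1:
  assumes "transition_edge (cube n) (H_adj n) k K x y" "H_adj n y z" "z \<noteq> x"
  shows "K z \<noteq> K x"
proof -
  have xy: "H_adj n x y" using assms(1) by (simp add: transition_edge_def)
  have "x \<noteq> y" "y \<in> cube n" "z \<in> cube n" "z \<noteq> y" using xy assms(2) by (auto simp: H_adj_def)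
  moreover have "proper_coloring (cube n) (H_adj n) k (K(x := K y, y := K x))"
    using assms(1) by (simp add: transition_edge_def)
  ultimately show ?thesis using assms(2,3) unfolding proper_coloring_def
    by (metis fun_upd_apply)
qed

lemma T2:
  assumes "transition_edge (cube n) (H_adj n) k K x y" "H_adj n x z" "z \<noteq> y"
  shows "K z \<noteq> K y"
proof -
  have xy: "H_adj n x y" using assms(1) by (simp add: transition_edge_def)
  have "x \<noteq> y" "x \<in> cube n" "z \<in> cube n" "z \<noteq> x" using xy assms(2) by (auto simp: H_adj_def)
  moreover have "proper_coloring (cube n) (H_adj n) k (K(x := K y, y := K x))"
    using assms(1) by (simp add: transition_edge_def)
  ultimately show ?thesis using assms(2,3) unfolding proper_coloring_def
    by (metis fun_upd_apply)
qed

lemma sp4: "simple_path V E [a,b,c,d] \<longleftrightarrow> a \<in> V \<and> b \<in> V \<and> c \<in> V \<and> d \<in> V \<and>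
   distinct [a,b,c,d] \<and> E a b \<and> E b c \<and> E c d"
  unfolding simple_path_def
  apply (auto simp: less_Suc_eq nth_Cons split: nat.splits)
  done

lemma four: "(a::nat) < 4 \<Longrightarrow> b < 4 \<Longrightarrow> c < 4 \<Longrightarrow> x < 4 \<Longrightarrow> y < 4 \<Longrightarrow>
  a \<noteq> b \<Longrightarrow> a \<noteq> c \<Longrightarrow> b \<noteq> c \<Longrightarrow> x \<noteq> a \<Longrightarrow> x \<noteq> b \<Longrightarrow> x \<noteq> c \<Longrightarrow>
  y \<noteq> a \<Longrightarrow> y \<noteq> b \<Longrightarrow> y \<noteq> c \<Longrightarrow> x = y"
proof -
  assume h: "a < 4" "b < 4" "c < 4" "x < 4" "y < 4" "a \<noteq> b" "a \<noteq> c" "b \<noteq> c"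
    "x \<noteq> a" "x \<noteq> b" "x \<noteq> c" "y \<noteq> a" "y \<noteq> b" "y \<noteq> c"
  have sub: "{a,b,c,x} \<subseteq> {..<4}" using h by auto
  have "card {a,b,c,x} = 4" using h by auto
  then have "{a,b,c,x} = {..<4}" using sub by (simp add: card_subset_eq)
  then have "y \<in> {a,b,c,x}" using h by auto
  then show ?thesis using h by auto
qed

lemma partA:
  assumes n: "n \<ge> 3" and pc: "proper_coloring (cube n) (H_adj n) 4 K"
    and sp: "simple_path (cube n) (H_adj n) [x1, x2, x3, x4]"
    and t12: "transition_edge (cube n) (H_adj n) 4 K x1 x2"
    and t23: "transition_edge (cube n) (H_adj n) 4 K x2 x3"
    and t34: "transition_edge (cube n) (H_adj n) 4 K x3 x4"
  shows "distinct [K x1, K x2, K x3, K x4]"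
proof -
  have a: "H_adj n x1 x2" "H_adj n x2 x3" "H_adj n x3 x4" and d: "distinct [x1,x2,x3,x4]"
    and c: "x1 \<in> cube n" "x2 \<in> cube n" "x3 \<in> cube n" "x4 \<in> cube n"
    using sp by (auto simp: sp4)
  have pr: "\<And>u v. H_adj n u v \<Longrightarrow> K u \<noteq> K v" "\<And>u. u \<in> cube n \<Longrightarrow> K u < 4"
    using pc by (auto simp: proper_coloring_def H_adj_def)
  have k12: "K x1 \<noteq> K x2" "K x2 \<noteq> K x3" "K x3 \<noteq> K x4" using a pr by auto
  have k13: "K x1 \<noteq> K x3" using T2[OF t23 adj_sym[OF a(1)]] d by auto
  have k24: "K x4 \<noteq> K x2" using T1[OF t23 a(3)] d by auto
  have k14: "K x1 \<noteq> K x4"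
  proof
    assume eq: "K x1 = K x4"
    obtain d1 where d1: "d1 \<in> EE n" "x2 = nb d1 x1" using adj_char[OF a(1)] by auto
    obtain d2 where d2: "d2 \<in> EE n" "x3 = nb d2 x2" using adj_char[OF a(2)] by auto
    obtain d3 where d3: "d3 \<in> EE n" "x4 = nb d3 x3" using adj_char[OF a(3)] by auto
    have "card (EE n - {d1,d2,d3}) \<ge> card (EE n) - card {d1,d2,d3}"
      by (rule diff_card_le_card_Diff) simp
    moreover have "card {d1,d2,d3} \<le> 3" by (simp add: card_insert_le_m1)
    ultimately have "card (EE n - {d1,d2,d3}) > 0" using n card_EE[of n] by linarith
    then obtain e where e: "e \<in> EE n" "e \<notin> {d1,d2,d3}"
      by (metis Diff_iff all_not_in_conv card.empty less_irrefl)
    define u where "u = nb e x2"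
    define w where "w = nb e x3"
    have n2: "n \<ge> 2" using n by simp
    have au: "H_adj n x2 u" unfolding u_def by (rule adj_nb[OF c(2) e(1) n2])
    have aw: "H_adj n x3 w" unfolding w_def by (rule adj_nb[OF c(3) e(1) n2])
    have x1': "x1 = nb d1 x2" using d1 by simp
    have x2': "x2 = nb d2 x3" using d2 by simp
    have u1: "u \<noteq> x1" using nb_inj[OF e(1) d1(1) c(2)] e x1' u_def by auto
    have u3: "u \<noteq> x3" using nb_inj[OF e(1) d2(1) c(2)] e d2 u_def by auto
    have w2: "w \<noteq> x2" using nb_inj[OF e(1) d2(1) c(3)] e x2' w_def by auto
    have w4: "w \<noteq> x4" using nb_inj[OF e(1) d3(1) c(3)] e d3 w_def by auto
    have Ku: "K u \<noteq> K x1" "K u \<noteq> K x3" "K u \<noteq> K x2" "K u < 4"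
      using T1[OF t12 au u1] T2[OF t23 au u3] pr(1)[OF au] pr(2)[OF nb_cube[OF c(2)]] u_def by auto
    have Kw: "K w \<noteq> K x2" "K w \<noteq> K x4" "K w \<noteq> K x3" "K w < 4"
      using T1[OF t23 aw w2] T2[OF t34 aw w4] pr(1)[OF aw] pr(2)[OF nb_cube[OF c(3)]] w_def by auto
    have "K x1 < 4" "K x2 < 4" "K x3 < 4" using pr(2) c by auto
    then have same: "K u = K w" using Ku Kw k12 k13 eq four[of "K x1" "K x2" "K x3" "K u" "K w"] by auto
    have lens: "length x2 = length x3" using c by (simp add: cube_def)
    have "H_adj n u w"
      using a(2) nb_hamming[OF lens, of e] nb_cube[OF c(2)] nb_cube[OF c(3)]
      unfolding u_def w_def H_adj_def by (metis nb_invol)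
    then show False using pr(1) same by auto
  qed
  show ?thesis using k12 k13 k24 k14 by auto
qed

lemma partL:
  assumes n: "n \<ge> 3" and pc: "proper_coloring (cube n) (H_adj n) 4 K"
    and sp: "simple_path (cube n) (H_adj n) [x1, x2, x3, x4]"
    and t12: "transition_edge (cube n) (H_adj n) 4 K x1 x2"
    and t23: "transition_edge (cube n) (H_adj n) 4 K x2 x3"
    and t34: "transition_edge (cube n) (H_adj n) 4 K x3 x4"
    and e: "e \<in> EE n" "x4 = nb e x3"
  shows "x2 = nb e x1"
proof -
  have a: "H_adj n x1 x2" "H_adj n x2 x3" "H_adj n x3 x4" and d: "distinct [x1,x2,x3,x4]"
    and c: "x1 \<in> cube n" "x2 \<in> cube n" "x3 \<in> cube n" "x4 \<in> cube n"
    using sp by (auto simp: sp4)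
  have pr: "\<And>u v. H_adj n u v \<Longrightarrow> K u \<noteq> K v" "\<And>u. u \<in> cube n \<Longrightarrow> K u < 4"
    using pc by (auto simp: proper_coloring_def H_adj_def)
  have dk: "distinct [K x1, K x2, K x3, K x4]" by (rule partA[OF n pc sp t12 t23 t34])
  define z where "z = nb e x2"
  have n2: "n \<ge> 2" using n by simp
  have az: "H_adj n x2 z" unfolding z_def by (rule adj_nb[OF c(2) e(1) n2])
  have "z = x1 \<or> z = x3"
  proof (rule ccontr)
    assume "\<not> (z = x1 \<or> z = x3)"
    then have z: "z \<noteq> x1" "z \<noteq> x3" by auto
    have Kz: "K z \<noteq> K x1" "K z \<noteq> K x3" "K z \<noteq> K x2" "K z < 4"
      using T1[OF t12 az z(1)] T2[OF t23 az z(2)] pr(1)[OF az] pr(2)[OF nb_cube[OF c(2)]] z_def by auto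
    have "K x1 < 4" "K x2 < 4" "K x3 < 4" "K x4 < 4" using pr(2) c by auto
    then have same: "K z = K x4" using Kz dk four[of "K x1" "K x2" "K x3" "K z" "K x4"] by auto
    have lens: "length x2 = length x3" using c by (simp add: cube_def)
    have "H_adj n z x4"
      using a(2) nb_hamming[OF lens, of e] nb_cube[OF c(2)] nb_cube[OF c(3)] e(2)
      unfolding z_def H_adj_def by (metis nb_invol)
    then show False using pr(1) same by auto
  qed
  moreover have "z \<noteq> x3"
  proof
    assume "z = x3"
    then have "x4 = x2" using e(2) z_def by (metis nb_invol)
    then show False using d by simp
  qed
  ultimately have "z = x1" by simp
  then show ?thesis unfolding z_def by (metis nb_invol)
qed

theorem lemma5p5:
  fixes n :: nat and K :: "bool list \<Rightarrow> nat"
  assumes "n \<ge> 3"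
    and "proper_coloring (cube n) (H_adj n) 4 K"
  shows "(\<forall>x1 x2 x3 x4. simple_path (cube n) (H_adj n) [x1, x2, x3, x4] \<and>
            transition_edge (cube n) (H_adj n) 4 K x1 x2 \<and>
            transition_edge (cube n) (H_adj n) 4 K x2 x3 \<and>
            transition_edge (cube n) (H_adj n) 4 K x3 x4 \<longrightarrow>
            distinct [K x1, K x2, K x3, K x4])
       \<and> \<not> (\<exists>xs. simple_path (cube n) (H_adj n) xs \<and> length xs - 1 > 3 \<and>
            (\<forall>i. Suc i < length xs \<longrightarrow>
               transition_edge (cube n) (H_adj n) 4 K (xs ! i) (xs ! Suc i)))"
proof (intro conjI allI impI notI)
  fix x1 x2 x3 x4
  assume "simple_path (cube n) (H_adj n) [x1, x2, x3, x4] \<and>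
            transition_edge (cube n) (H_adj n) 4 K x1 x2 \<and>
            transition_edge (cube n) (H_adj n) 4 K x2 x3 \<and>
            transition_edge (cube n) (H_adj n) 4 K x3 x4"
  then show "distinct [K x1, K x2, K x3, K x4]" using partA[OF assms] by blast
next
  assume "\<exists>xs. simple_path (cube n) (H_adj n) xs \<and> length xs - 1 > 3 \<and>
            (\<forall>i. Suc i < length xs \<longrightarrow>
               transition_edge (cube n) (H_adj n) 4 K (xs ! i) (xs ! Suc i))"
  then obtain xs where sp: "simple_path (cube n) (H_adj n) xs" and len: "length xs - 1 > 3"
    and tr: "\<And>i. Suc i < length xs \<Longrightarrow> transition_edge (cube n) (H_adj n) 4 K (xs ! i) (xs ! Suc i)"
    by blast
  have L: "length xs \<ge> 5" using len by simp
  have sp_all: "set xs \<subseteq> cube n" "distinct xs"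
    "\<And>i. Suc i < length xs \<Longrightarrow> H_adj n (xs ! i) (xs ! Suc i)"
    using sp by (auto simp: simple_path_def)
  have ne: "xs \<noteq> []" using L by auto
  have mem: "\<And>i. i < length xs \<Longrightarrow> xs ! i \<in> cube n" using sp_all(1) by auto
  have dst: "\<And>i j. i < length xs \<Longrightarrow> j < length xs \<Longrightarrow> i \<noteq> j \<Longrightarrow> xs ! i \<noteq> xs ! j"
    using sp_all(2) by (simp add: nth_eq_iff_index_eq)
  have m: "xs!0 \<in> cube n" "xs!1 \<in> cube n" "xs!2 \<in> cube n" "xs!3 \<in> cube n" "xs!4 \<in> cube n"
    using mem[of 0] mem[of 1] mem[of 2] mem[of 3] mem[of 4] L ne by simp_all
  have ds: "distinct [xs!0, xs!1, xs!2, xs!3, xs!4]"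
    using dst[of 0 1] dst[of 0 2] dst[of 0 3] dst[of 0 4] dst[of 1 2] dst[of 1 3] dst[of 1 4] dst[of 2 3] dst[of 2 4] dst[of 3 4] L ne by simp
  have a: "H_adj n (xs!0) (xs!1)" "H_adj n (xs!1) (xs!2)" "H_adj n (xs!2) (xs!3)" "H_adj n (xs!3) (xs!4)"
    using sp_all(3)[of 0] sp_all(3)[of 1] sp_all(3)[of 2] sp_all(3)[of 3] L by (simp_all add: eval_nat_numeral)
  have t: "transition_edge (cube n) (H_adj n) 4 K (xs!0) (xs!1)"
    "transition_edge (cube n) (H_adj n) 4 K (xs!1) (xs!2)"
    "transition_edge (cube n) (H_adj n) 4 K (xs!2) (xs!3)"
    "transition_edge (cube n) (H_adj n) 4 K (xs!3) (xs!4)"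
    using tr[of 0] tr[of 1] tr[of 2] tr[of 3] L by (simp_all add: eval_nat_numeral)
  have sp1: "simple_path (cube n) (H_adj n) [xs!0, xs!1, xs!2, xs!3]"
    unfolding sp4 using m a ds by simp
  have sp2: "simple_path (cube n) (H_adj n) [xs!1, xs!2, xs!3, xs!4]"
    unfolding sp4 using m a ds by simp
  obtain d where d: "d \<in> EE n" "xs!3 = nb d (xs!2)"
    using adj_char[OF a(3)] by blast
  obtain f where f: "f \<in> EE n" "xs!4 = nb f (xs!3)"
    using adj_char[OF a(4)] by blast
  have 1: "xs!1 = nb d (xs!0)" by (rule partL[OF assms sp1 t(1) t(2) t(3) d])
  have 2: "xs!2 = nb f (xs!1)" by (rule partL[OF assms sp2 t(2) t(3) t(4) f])
  have "xs!4 = xs!0" using 1 2 d(2) f(2) by (metis nb_invol nb_comm)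
  then show False using ds by simp
qed

end
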